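(* Let $\mathbb F$ be a field that is not the field with two elements. Let $V\subset\mathbb F^{n\times n}$ and $V'\subset\mathbb F^{n'\times n'}$ be vector spaces of pairwise commuting matrices, each containing a nonsingular matrix. Then the following are equivalent: (i) the Lie algebras $\mathrm L(V)$ and $\mathrm L(V')$ are isomorphic; (ii) $n=n'$ and $SVS^{-1}=V'$ for some nonsingular $S\in\mathbb F^{n\times n}$; (iii) $n=n'$ and $R\widetilde V R^{-1}=\widetilde{V'}$ for some nonsingular $R\in\mathbb F^{(n+1)\times(n+1)}$.
   Context: For a vector space $V\subset\mathbb F^{n\times n}$ of commuting matrices, $\widetilde V$ denotes the vector space of all $(n+1)\times(n+1)$ matrices $(A|a):=\begin{bmatrix}A&a\\0&0\end{bmatrix}$ with $A\in V$, $a\in\mathbb F^n$ (a column), and zero last row. $\mathrm L(V)$ is the Lie algebra $\widetilde V$ with bracket $[u,v]=uv-vu$, i.e. $[(A|a),(B|b)]=(0\,|\,Ab-Ba)$. *)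

theory Defs
  imports "Jordan_Normal_Form.Matrix"
begin

definition comm_mat_space :: "nat \<Rightarrow> 'a::field mat set \<Rightarrow> bool" where
  "comm_mat_space n V \<longleftrightarrow>
     V \<subseteq> carrier_mat n n \<and>
     0\<^sub>m n n \<in> V \<and>
     (\<forall>A\<in>V. \<forall>B\<in>V. A + B \<in> V) \<and>
     (\<forall>c. \<forall>A\<in>V. c \<cdot>\<^sub>m A \<in> V) \<and>
     (\<forall>A\<in>V. \<forall>B\<in>V. A * B = B * A)"

text \<open>The (n+1) x (n+1) matrix (A|a) = [[A, a], [0, 0]].\<close>
definition aug_mat :: "nat \<Rightarrow> 'a::field mat \<Rightarrow> 'a vec \<Rightarrow> 'a mat" where
  "aug_mat n A a = mat (n+1) (n+1)
     (\<lambda>(i,j). if i < n then (if j < n then A $$ (i,j) else a $ i) else 0)"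

definition tilde :: "nat \<Rightarrow> 'a::field mat set \<Rightarrow> 'a mat set" where
  "tilde n V = {aug_mat n A a | A a. A \<in> V \<and> a \<in> carrier_vec n}"

definition lie_iso :: "('a::field mat \<Rightarrow> 'a mat) \<Rightarrow> 'a mat set \<Rightarrow> 'a mat set \<Rightarrow> bool" where
  "lie_iso \<phi> U W \<longleftrightarrow>
     bij_betw \<phi> U W \<and>
     (\<forall>x\<in>U. \<forall>y\<in>U. \<phi> (x + y) = \<phi> x + \<phi> y) \<and>
     (\<forall>c. \<forall>x\<in>U. \<phi> (c \<cdot>\<^sub>m x) = c \<cdot>\<^sub>m \<phi> x) \<and>
     (\<forall>x\<in>U. \<forall>y\<in>U. \<phi> (x * y - y * x) = \<phi> x * \<phi> y - \<phi> y * \<phi> x)"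

definition lie_isomorphic :: "'a::field mat set \<Rightarrow> 'a mat set \<Rightarrow> bool" where
  "lie_isomorphic U W \<longleftrightarrow> (\<exists>\<phi>. lie_iso \<phi> U W)"

end

theory Submission
  imports Defs "Jordan_Normal_Form.Determinant"
begin


definition mp :: "nat \<Rightarrow> 'a::field mat \<Rightarrow> 'a mat" where
  "mp n X = mat n n (\<lambda>(i,j). X $$ (i,j))"
definition vp :: "nat \<Rightarrow> 'a::field mat \<Rightarrow> 'a vec" where
  "vp n X = vec n (\<lambda>i. X $$ (i,n))"

lemma aug_carrier[simp]: "aug_mat n A a \<in> carrier_mat (n+1) (n+1)"
  unfolding aug_mat_def by auto
lemma aug_dims[simp]: "dim_row (aug_mat n A a) = n+1" "dim_col (aug_mat n A a) = n+1"
  unfolding aug_mat_def by auto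
lemma aug_index: "i<n+1 \<Longrightarrow> j<n+1 \<Longrightarrow> aug_mat n A a $$ (i,j) =
   (if i<n then if j<n then A$$(i,j) else a$i else 0)"
  unfolding aug_mat_def by auto

lemma mp_aug[simp]: "A \<in> carrier_mat n n \<Longrightarrow> mp n (aug_mat n A a) = A"
  unfolding mp_def by (auto simp: aug_index)
lemma vp_aug[simp]: "a \<in> carrier_vec n \<Longrightarrow> vp n (aug_mat n A a) = a"
  unfolding vp_def by (auto simp: aug_index)

lemma aug_inj: "A \<in> carrier_mat n n \<Longrightarrow> B \<in> carrier_mat n n \<Longrightarrow> a \<in> carrier_vec n \<Longrightarrow> b \<in> carrier_vec n
  \<Longrightarrow> aug_mat n A a = aug_mat n B b \<Longrightarrow> A = B \<and> a = b"
  by (metis mp_aug vp_aug)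

lemma aug_add: "A \<in> carrier_mat n n \<Longrightarrow> B \<in> carrier_mat n n \<Longrightarrow> a \<in> carrier_vec n \<Longrightarrow> b \<in> carrier_vec n
  \<Longrightarrow> aug_mat n A a + aug_mat n B b = aug_mat n (A+B) (a+b)"
  by (rule eq_matI) (auto simp: aug_index)

lemma aug_minus: "A \<in> carrier_mat n n \<Longrightarrow> B \<in> carrier_mat n n \<Longrightarrow> a \<in> carrier_vec n \<Longrightarrow> b \<in> carrier_vec n
  \<Longrightarrow> aug_mat n A a - aug_mat n B b = aug_mat n (A-B) (a-b)"
  by (rule eq_matI) (auto simp: aug_index)

lemma aug_smult: "A \<in> carrier_mat n n \<Longrightarrow> a \<in> carrier_vec n
  \<Longrightarrow> c \<cdot>\<^sub>m aug_mat n A a = aug_mat n (c \<cdot>\<^sub>m A) (c \<cdot>\<^sub>v a)"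
  by (rule eq_matI) (auto simp: aug_index)

lemma aug_mult: assumes "A \<in> carrier_mat n n" "B \<in> carrier_mat n n" "b \<in> carrier_vec n"
  shows "aug_mat n A a * aug_mat n B b = aug_mat n (A*B) (A *\<^sub>v b)"
proof (rule eq_matI)
  fix i j assume ij: "i < dim_row (aug_mat n (A*B) (A *\<^sub>v b))" "j < dim_col (aug_mat n (A*B) (A *\<^sub>v b))"
  hence i: "i < n+1" and j: "j < n+1" by auto
  have "(aug_mat n A a * aug_mat n B b) $$ (i,j) = (\<Sum>k\<in>{0..<n+1}. aug_mat n A a $$ (i,k) * aug_mat n B b $$ (k,j))"
    using i j by (simp add: scalar_prod_def)
  also have "\<dots> = (\<Sum>k\<in>{0..<n}. aug_mat n A a $$ (i,k) * aug_mat n B b $$ (k,j))"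
    using j by (simp add: aug_index)
  also have "\<dots> = aug_mat n (A*B) (A *\<^sub>v b) $$ (i,j)"
    using i j assms by (auto simp: aug_index scalar_prod_def intro!: sum.cong)
  finally show "(aug_mat n A a * aug_mat n B b) $$ (i,j) = aug_mat n (A*B) (A *\<^sub>v b) $$ (i,j)" .
qed auto


lemma tilde_carrier: "comm_mat_space n V \<Longrightarrow> tilde n V \<subseteq> carrier_mat (n+1) (n+1)"
  unfolding tilde_def by auto


lemma conj_lie_iso:
  assumes U: "U \<subseteq> carrier_mat k k" and R: "R \<in> carrier_mat k k" and Q: "Q \<in> carrier_mat k k"
    and RQ: "R * Q = 1\<^sub>m k" and QR: "Q * R = 1\<^sub>m k" and im: "(\<lambda>M. R * M * Q) ` U = W"
  shows "lie_iso (\<lambda>M. R * M * Q) U W"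
  unfolding lie_iso_def
proof (intro conjI ballI allI)
  have QRz: "Q * (R * z) = z" if "z \<in> carrier_mat k m" for z m
    using that Q R QR assoc_mult_mat[OF Q R that, symmetric] by (simp add: left_mult_one_mat)
  show "bij_betw (\<lambda>M. R * M * Q) U W"
    unfolding bij_betw_def
  proof
    show "inj_on (\<lambda>M. R * M * Q) U"
    proof (rule inj_onI)
      fix x y assume x: "x \<in> U" and y: "y \<in> U" and e: "R * x * Q = R * y * Q"
      have xc: "x \<in> carrier_mat k k" and yc: "y \<in> carrier_mat k k" using x y U by auto
      have "Q * (R * x * Q) = x * Q"
        using xc R Q QRz[of "x * Q" k] by simp
      hence 1: "Q * (R * x * Q) * R = x"
        using xc R Q QR by (simp add: right_mult_one_mat)
      have "Q * (R * y * Q) = y * Q"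
        using yc R Q QRz[of "y * Q" k] by simp
      hence 2: "Q * (R * y * Q) * R = y"
        using yc R Q QR by (simp add: right_mult_one_mat)
      have "x = Q * (R * x * Q) * R" using 1 by simp
      also have "\<dots> = Q * (R * y * Q) * R" using e by simp
      also have "\<dots> = y" using 2 by simp
      finally show "x = y" .
    qed
  qed (rule im)
next
  fix x y assume x: "x \<in> U" and y: "y \<in> U"
  have QRz: "Q * (R * z) = z" if "z \<in> carrier_mat k m" for z m
    using that Q R QR assoc_mult_mat[OF Q R that, symmetric] by (simp add: left_mult_one_mat)
  have xc: "x \<in> carrier_mat k k" and yc: "y \<in> carrier_mat k k" using x y U by auto
  show "R * (x + y) * Q = R * x * Q + R * y * Q"
    using mult_add_distrib_mat[OF R xc yc] add_mult_distrib_mat[of "R*x" k k "R*y" Q k] xc yc R Q by simp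
  have e1: "R * x * Q * (R * y * Q) = R * (x * y) * Q"
  proof -
    have c1: "R * x \<in> carrier_mat k k" "R * y * Q \<in> carrier_mat k k" "y * Q \<in> carrier_mat k k"
      using xc yc R Q by auto
    have "R * x * Q * (R * y * Q) = (R * x) * (Q * (R * y * Q))"
      using assoc_mult_mat[OF c1(1) Q c1(2)] .
    also have "Q * (R * y * Q) = y * Q"
      using QRz[OF c1(3)] assoc_mult_mat[OF R yc Q] assoc_mult_mat[OF R xc Q] by simp
    also have "(R * x) * (y * Q) = R * (x * y) * Q"
      using assoc_mult_mat[OF c1(1) yc Q] assoc_mult_mat[OF R xc yc] by simp
    finally show ?thesis .
  qed
  have e2: "R * y * Q * (R * x * Q) = R * (y * x) * Q"
  proof -
    have c1: "R * y \<in> carrier_mat k k" "R * x * Q \<in> carrier_mat k k" "x * Q \<in> carrier_mat k k"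
      using xc yc R Q by auto
    have "R * y * Q * (R * x * Q) = (R * y) * (Q * (R * x * Q))"
      using assoc_mult_mat[OF c1(1) Q c1(2)] .
    also have "Q * (R * x * Q) = x * Q"
      using QRz[OF c1(3)] assoc_mult_mat[OF R yc Q] assoc_mult_mat[OF R xc Q] by simp
    also have "(R * y) * (x * Q) = R * (y * x) * Q"
      using assoc_mult_mat[OF c1(1) xc Q] assoc_mult_mat[OF R yc xc] by simp
    finally show ?thesis .
  qed
  have "R * (x * y - y * x) * Q = R * (x * y) * Q - R * (y * x) * Q"
    using mult_minus_distrib_mat[of R k k "x*y" k "y*x"] minus_mult_distrib_mat[of "R*(x*y)" k k "R*(y*x)" Q k] xc yc R Q by simp
  thus "R * (x * y - y * x) * Q = R * x * Q * (R * y * Q) - R * y * Q * (R * x * Q)"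
    using e1 e2 by simp
next
  fix c x assume x: "x \<in> U"
  have xc: "x \<in> carrier_mat k k" using x U by auto
  show "R * (c \<cdot>\<^sub>m x) * Q = c \<cdot>\<^sub>m (R * x * Q)"
    using mult_smult_distrib[OF R xc] mult_smult_assoc_mat[of "R*x" k k Q k] xc R Q by simp
qed


lemma lin_to_mat:
  fixes f :: "'a::field vec \<Rightarrow> 'a vec"
  assumes f: "\<And>b. b \<in> carrier_vec n \<Longrightarrow> f b \<in> carrier_vec m"
    and add: "\<And>b c. b \<in> carrier_vec n \<Longrightarrow> c \<in> carrier_vec n \<Longrightarrow> f (b+c) = f b + f c"
    and sm: "\<And>k b. b \<in> carrier_vec n \<Longrightarrow> f (k \<cdot>\<^sub>v b) = k \<cdot>\<^sub>v f b"
  shows "\<exists>M\<in>carrier_mat m n. \<forall>b\<in>carrier_vec n. M *\<^sub>v b = f b"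
proof
  define M where "M = mat m n (\<lambda>(i,j). f (unit_vec n j) $ i)"
  show "M \<in> carrier_mat m n" unfolding M_def by auto
  define tr where "tr k b = vec n (\<lambda>j. if j < k then b $ j else (0::'a))" for k b
  have f0: "f (0\<^sub>v n) = 0\<^sub>v m"
  proof -
    have "f (0\<^sub>v n) = f (0 \<cdot>\<^sub>v 0\<^sub>v n)" by (auto intro!: arg_cong[of _ _ f])
    also have "\<dots> = 0 \<cdot>\<^sub>v f (0\<^sub>v n)" by (rule sm) auto
    also have "\<dots> = 0\<^sub>v m" using f[of "0\<^sub>v n"] by (auto intro!: eq_vecI)
    finally show ?thesis .
  qed
  have claim: "k \<le> n \<Longrightarrow> f (tr k b) = vec m (\<lambda>i. \<Sum>j<k. b $ j * f (unit_vec n j) $ i)"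
    if b: "b \<in> carrier_vec n" for k b
  proof (induction k)
    case 0
    have "tr 0 b = 0\<^sub>v n" unfolding tr_def by auto
    then show ?case using f0 by auto
  next
    case (Suc k)
    have e: "tr (Suc k) b = tr k b + b $ k \<cdot>\<^sub>v unit_vec n k"
      unfolding tr_def using Suc.prems by (auto intro!: eq_vecI simp: less_Suc_eq)
    have "f (tr (Suc k) b) = f (tr k b) + b $ k \<cdot>\<^sub>v f (unit_vec n k)"
      unfolding e by (subst add) (auto simp: tr_def sm)
    also have "\<dots> = vec m (\<lambda>i. \<Sum>j<Suc k. b $ j * f (unit_vec n j) $ i)"
      using Suc f[of "unit_vec n k"] by (auto intro!: eq_vecI)
    finally show ?case .
  qed
  show "\<forall>b\<in>carrier_vec n. M *\<^sub>v b = f b"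
  proof
    fix b :: "'a vec" assume b: "b \<in> carrier_vec n"
    have "tr n b = b" unfolding tr_def using b by (auto intro!: eq_vecI)
    hence "f b = vec m (\<lambda>i. \<Sum>j<n. b $ j * f (unit_vec n j) $ i)" using claim[OF b, of n] by simp
    thus "M *\<^sub>v b = f b" unfolding M_def using b
      by (auto intro!: eq_vecI simp: scalar_prod_def lessThan_atLeast0 mult.commute)
  qed
qed


lemma right_inv_dim:
  fixes A :: "'a::field mat"
  assumes A: "A \<in> carrier_mat m k" and B: "B \<in> carrier_mat k m" and AB: "A * B = 1\<^sub>m m"
  shows "m \<le> k"
proof (rule ccontr)
  assume "\<not> m \<le> k" hence km: "k < m" by simp
  define Ap where "Ap = mat m m (\<lambda>(i,j). if j < k then A $$ (i,j) else 0)"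
  define Bp where "Bp = mat m m (\<lambda>(i,j). if i < k then B $$ (i,j) else 0)"
  have Apc: "Ap \<in> carrier_mat m m" and Bpc: "Bp \<in> carrier_mat m m" unfolding Ap_def Bp_def by auto
  have "Ap * Bp = A * B"
  proof (rule eq_matI)
    fix i j assume i: "i < dim_row (A * B)" and j: "j < dim_col (A * B)"
    hence i': "i < m" and j': "j < m" using A B by auto
    have "(Ap * Bp) $$ (i,j) = (\<Sum>l\<in>{0..<m}. Ap $$ (i,l) * Bp $$ (l,j))"
      using i' j' Apc Bpc by (simp add: scalar_prod_def)
    also have "\<dots> = (\<Sum>l\<in>{0..<k}. Ap $$ (i,l) * Bp $$ (l,j))"
      using km i' j' by (intro sum.mono_neutral_right) (auto simp: Ap_def Bp_def)
    also have "\<dots> = (\<Sum>l\<in>{0..<k}. A $$ (i,l) * B $$ (l,j))"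
      using km i' j' by (intro sum.cong) (auto simp: Ap_def Bp_def)
    also have "\<dots> = (A * B) $$ (i,j)"
      using i' j' A B by (simp add: scalar_prod_def)
    finally show "(Ap * Bp) $$ (i,j) = (A * B) $$ (i,j)" .
  qed (use A B Apc Bpc in auto)
  hence "Bp * Ap = 1\<^sub>m m" using mat_mult_left_right_inverse[OF Apc Bpc] AB by simp
  hence "(Bp * Ap) $$ (m-1, m-1) = 1" using km by simp
  moreover have "(Bp * Ap) $$ (m-1, m-1) = 0"
  proof -
    have "\<not> m - Suc 0 < k" using km by simp
    thus ?thesis using km Apc Bpc by (simp add: scalar_prod_def Bp_def)
  qed
  ultimately show False by simp
qed



lemma tilde_mem: "A \<in> V \<Longrightarrow> a \<in> carrier_vec n \<Longrightarrow> aug_mat n A a \<in> tilde n V"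
  unfolding tilde_def by auto

lemma tilde_elim: "x \<in> tilde n V \<Longrightarrow> \<exists>A a. x = aug_mat n A a \<and> A \<in> V \<and> a \<in> carrier_vec n"
  unfolding tilde_def by auto

lemma inv_obtain: assumes "A \<in> carrier_mat n n" "invertible_mat (A :: 'a::field mat)"
  shows "\<exists>B\<in>carrier_mat n n. A * B = 1\<^sub>m n \<and> B * A = 1\<^sub>m n"
proof -
  obtain B where 1: "A * B = 1\<^sub>m n" and 2: "B * A = 1\<^sub>m (dim_row B)"
    using assms unfolding invertible_mat_def inverts_mat_def by auto
  have "dim_col B = n" using arg_cong[OF 1, of dim_col] by simp
  moreover have "dim_row B = n" using arg_cong[OF 2, of dim_col] assms(1) by simp
  ultimately have Bc: "B \<in> carrier_mat n n" unfolding carrier_mat_def by blast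
  have "B * A = 1\<^sub>m n" using 2 \<open>dim_row B = n\<close> by simp
  thus ?thesis using 1 Bc by blast
qed

lemma brk: assumes cV: "comm_mat_space n V" and x: "x \<in> tilde n V" and y: "y \<in> tilde n V"
  shows "\<exists>c\<in>carrier_vec n. x * y - y * x = aug_mat n (0\<^sub>m n n) c"
proof -
  obtain A a where x': "x = aug_mat n A a" "A \<in> V" "a \<in> carrier_vec n" using tilde_elim[OF x] by blast
  obtain B b where y': "y = aug_mat n B b" "B \<in> V" "b \<in> carrier_vec n" using tilde_elim[OF y] by blast
  have Ac: "A \<in> carrier_mat n n" and Bc: "B \<in> carrier_mat n n" and AB: "A * B = B * A"
    using cV x' y' unfolding comm_mat_space_def by auto
  have "x * y - y * x = aug_mat n (A * B - B * A) (A *\<^sub>v b - B *\<^sub>v a)"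
    unfolding x' y' using Ac Bc x' y' by (simp add: aug_mult aug_minus)
  also have "A * B - B * A = 0\<^sub>m n n" using AB Ac Bc by simp
  finally show ?thesis using Ac Bc x' y' by auto
qed

lemma gen: assumes cV: "comm_mat_space n V" and A0: "A0 \<in> V" and B0: "B0 \<in> carrier_mat n n"
  and AB: "A0 * B0 = 1\<^sub>m n" and c: "c \<in> carrier_vec n"
  shows "aug_mat n (0\<^sub>m n n) c = aug_mat n A0 (0\<^sub>v n) * aug_mat n (0\<^sub>m n n) (B0 *\<^sub>v c)
          - aug_mat n (0\<^sub>m n n) (B0 *\<^sub>v c) * aug_mat n A0 (0\<^sub>v n)"
proof -
  have Ac: "A0 \<in> carrier_mat n n" using cV A0 unfolding comm_mat_space_def by auto
  have "A0 *\<^sub>v (B0 *\<^sub>v c) = c" using assoc_mult_mat_vec[OF Ac B0 c, symmetric] AB c by simp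
  moreover have "0\<^sub>m n n *\<^sub>v (0\<^sub>v n :: 'a vec) = 0\<^sub>v n" by (auto intro!: eq_vecI)
  moreover have z: "0\<^sub>m n n - 0\<^sub>m n n = (0\<^sub>m n n :: 'a mat)" by (rule minus_r_inv_mat) auto
  ultimately show ?thesis using Ac B0 c apply (simp add: aug_mult aug_minus) by (simp only: z)
qed

lemma mat_eq_by_vec: assumes X: "(X :: 'a::field mat) \<in> carrier_mat m k" and Y: "Y \<in> carrier_mat m k"
  and e: "\<And>b. b \<in> carrier_vec k \<Longrightarrow> X *\<^sub>v b = Y *\<^sub>v b"
  shows "X = Y"
proof (rule eq_matI)
  fix i j assume i: "i < dim_row Y" and j: "j < dim_col Y"
  have "X $$ (i,j) = (X *\<^sub>v unit_vec k j) $ i" using X Y i j by simp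
  also have "\<dots> = (Y *\<^sub>v unit_vec k j) $ i" using e[of "unit_vec k j"] by simp
  also have "\<dots> = Y $$ (i,j)" using X Y i j by simp
  finally show "X $$ (i,j) = Y $$ (i,j)" .
qed (use X Y in auto)


lemma bracket_AN:
  fixes A :: "'a::field mat"
  assumes A: "A \<in> carrier_mat n n" and a: "a \<in> carrier_vec n" and b: "b \<in> carrier_vec n"
  shows "aug_mat n A a * aug_mat n (0\<^sub>m n n) b - aug_mat n (0\<^sub>m n n) b * aug_mat n A a
     = aug_mat n (0\<^sub>m n n) (A *\<^sub>v b)"
proof -
  have z: "0\<^sub>m n n - 0\<^sub>m n n = (0\<^sub>m n n :: 'a mat)" by (rule minus_r_inv_mat) auto
  have z2: "0\<^sub>m n n *\<^sub>v a = 0\<^sub>v n" using a by (auto intro!: eq_vecI)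
  have z3: "A * 0\<^sub>m n n = 0\<^sub>m n n" "0\<^sub>m n n * A = 0\<^sub>m n n" using A by auto
  have z4: "A *\<^sub>v b - 0\<^sub>v n = A *\<^sub>v b" using A b by (auto intro!: eq_vecI)
  show ?thesis using A a b by (simp add: aug_mult aug_minus z z2 z3 z4)
qed

lemma i_to_ii:
  fixes V V' :: "'a::field mat set"
  assumes cV: "comm_mat_space n V" and cV': "comm_mat_space n' V'"
    and inv: "\<exists>A\<in>V. invertible_mat A" and inv': "\<exists>A\<in>V'. invertible_mat A"
    and iso: "lie_iso \<phi> (tilde n V) (tilde n' V')"
  shows "n = n' \<and> (\<exists>S T. S \<in> carrier_mat n n \<and> T \<in> carrier_mat n n \<and>
                 S * T = 1\<^sub>m n \<and> T * S = 1\<^sub>m n \<and> (\<lambda>A. S * A * T) ` V = V')"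
proof -
  have Vc: "\<And>A. A \<in> V \<Longrightarrow> A \<in> carrier_mat n n" and V0: "0\<^sub>m n n \<in> V"
    using cV unfolding comm_mat_space_def by auto
  have V'c: "\<And>A. A \<in> V' \<Longrightarrow> A \<in> carrier_mat n' n'" and V'0: "0\<^sub>m n' n' \<in> V'"
    using cV' unfolding comm_mat_space_def by auto
  have bij: "bij_betw \<phi> (tilde n V) (tilde n' V')" using iso unfolding lie_iso_def by blast
  have injp: "inj_on \<phi> (tilde n V)" and imp: "\<phi> ` tilde n V = tilde n' V'"
    using bij unfolding bij_betw_def by auto
  have into: "\<And>x. x \<in> tilde n V \<Longrightarrow> \<phi> x \<in> tilde n' V'" using imp by blast
  have padd: "\<And>x y. x \<in> tilde n V \<Longrightarrow> y \<in> tilde n V \<Longrightarrow> \<phi> (x + y) = \<phi> x + \<phi> y"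
    using iso unfolding lie_iso_def by blast
  have psm: "\<And>c x. x \<in> tilde n V \<Longrightarrow> \<phi> (c \<cdot>\<^sub>m x) = c \<cdot>\<^sub>m \<phi> x"
    using iso unfolding lie_iso_def by blast
  have pbr: "\<And>x y. x \<in> tilde n V \<Longrightarrow> y \<in> tilde n V \<Longrightarrow> \<phi> (x * y - y * x) = \<phi> x * \<phi> y - \<phi> y * \<phi> x"
    using iso unfolding lie_iso_def by blast
  obtain A0 where A0: "A0 \<in> V" "invertible_mat A0" using inv by blast
  obtain B0 where B0: "B0 \<in> carrier_mat n n" "A0 * B0 = 1\<^sub>m n"
    using inv_obtain[OF Vc[OF A0(1)] A0(2)] by blast
  obtain A0' where A0': "A0' \<in> V'" "invertible_mat A0'" using inv' by blast
  obtain B0' where B0': "B0' \<in> carrier_mat n' n'" "A0' * B0' = 1\<^sub>m n'"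
    using inv_obtain[OF V'c[OF A0'(1)] A0'(2)] by blast
  define N where "N c = aug_mat n (0\<^sub>m n n) c" for c :: "'a vec"
  define N' where "N' c = aug_mat n' (0\<^sub>m n' n') c" for c :: "'a vec"
  have Nt: "\<And>c. c \<in> carrier_vec n \<Longrightarrow> N c \<in> tilde n V" unfolding N_def using V0 by (rule tilde_mem)
  have N't: "\<And>c. c \<in> carrier_vec n' \<Longrightarrow> N' c \<in> tilde n' V'" unfolding N'_def using V'0 by (rule tilde_mem)
  have Ninj: "\<And>b c. b \<in> carrier_vec n \<Longrightarrow> c \<in> carrier_vec n \<Longrightarrow> N b = N c \<Longrightarrow> b = c"
    unfolding N_def using aug_inj[of "0\<^sub>m n n" n "0\<^sub>m n n"] by auto
  have s1: "\<exists>d\<in>carrier_vec n'. \<phi> (N c) = N' d" if c: "c \<in> carrier_vec n" for c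
  proof -
    let ?x = "aug_mat n A0 (0\<^sub>v n)" and ?y = "aug_mat n (0\<^sub>m n n) (B0 *\<^sub>v c)"
    have x: "?x \<in> tilde n V" and y: "?y \<in> tilde n V"
      using A0 V0 B0 c by (auto intro: tilde_mem)
    have "N c = ?x * ?y - ?y * ?x" unfolding N_def using gen[OF cV A0(1) B0 c] .
    hence "\<phi> (N c) = \<phi> ?x * \<phi> ?y - \<phi> ?y * \<phi> ?x" using pbr[OF x y] by simp
    thus ?thesis using brk[OF cV' into[OF x] into[OF y]] unfolding N'_def by auto
  qed
  define Sf where "Sf c = vp n' (\<phi> (N c))" for c
  have Sf: "\<And>c. c \<in> carrier_vec n \<Longrightarrow> Sf c \<in> carrier_vec n' \<and> \<phi> (N c) = N' (Sf c)"
  proof -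
    fix c :: "'a vec" assume c: "c \<in> carrier_vec n"
    obtain d where d: "d \<in> carrier_vec n'" "\<phi> (N c) = N' d" using s1[OF c] by blast
    have "Sf c = d" unfolding Sf_def d(2) N'_def using d(1) by simp
    thus "Sf c \<in> carrier_vec n' \<and> \<phi> (N c) = N' (Sf c)" using d by simp
  qed
  have s2: "\<exists>c\<in>carrier_vec n. \<phi> (N c) = N' d" if d: "d \<in> carrier_vec n'" for d
  proof -
    let ?x = "aug_mat n' A0' (0\<^sub>v n')" and ?y = "aug_mat n' (0\<^sub>m n' n') (B0' *\<^sub>v d)"
    have x: "?x \<in> tilde n' V'" and y: "?y \<in> tilde n' V'"
      using A0' V'0 B0' d by (auto intro: tilde_mem)
    have "?x \<in> \<phi> ` tilde n V" using x imp by simp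
    then obtain u where u: "u \<in> tilde n V" "?x = \<phi> u" by (rule imageE)
    have "?y \<in> \<phi> ` tilde n V" using y imp by simp
    then obtain v where v: "v \<in> tilde n V" "?y = \<phi> v" by (rule imageE)
    have "N' d = ?x * ?y - ?y * ?x" unfolding N'_def using gen[OF cV' A0'(1) B0' d] .
    also have "\<dots> = \<phi> (u * v - v * u)" unfolding pbr[OF u(1) v(1)] u(2) v(2) ..
    finally show ?thesis using brk[OF cV u(1) v(1)] unfolding N_def by auto
  qed
  have Sfc: "\<And>c. c \<in> carrier_vec n \<Longrightarrow> Sf c \<in> carrier_vec n'" using Sf by blast
  have SfN: "\<And>c. c \<in> carrier_vec n \<Longrightarrow> \<phi> (N c) = N' (Sf c)" using Sf by blast
  have N'eq: "\<And>b c. b \<in> carrier_vec n' \<Longrightarrow> N' b = N' c \<Longrightarrow> vp n' (N' c) = b"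
    unfolding N'_def by (metis vp_aug)
  have Sfadd: "Sf (b + c) = Sf b + Sf c" if b: "b \<in> carrier_vec n" and c: "c \<in> carrier_vec n" for b c
  proof -
    have "N (b + c) = N b + N c" unfolding N_def using b c by (simp add: aug_add)
    hence "\<phi> (N (b + c)) = N' (Sf b) + N' (Sf c)" using padd[OF Nt[OF b] Nt[OF c]] SfN b c by simp
    also have "\<dots> = N' (Sf b + Sf c)" unfolding N'_def using Sfc b c by (simp add: aug_add)
    finally have "Sf (b + c) = vp n' (N' (Sf b + Sf c))" unfolding Sf_def by simp
    also have "\<dots> = Sf b + Sf c" unfolding N'_def using Sfc b c by simp
    finally show ?thesis .
  qed
  have Sfsm: "Sf (k \<cdot>\<^sub>v b) = k \<cdot>\<^sub>v Sf b" if b: "b \<in> carrier_vec n" for b k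
  proof -
    have "N (k \<cdot>\<^sub>v b) = k \<cdot>\<^sub>m N b" unfolding N_def using b by (simp add: aug_smult)
    hence "\<phi> (N (k \<cdot>\<^sub>v b)) = k \<cdot>\<^sub>m N' (Sf b)" using psm[OF Nt[OF b]] SfN b by simp
    also have "\<dots> = N' (k \<cdot>\<^sub>v Sf b)" unfolding N'_def using Sfc b by (simp add: aug_smult)
    finally have "Sf (k \<cdot>\<^sub>v b) = vp n' (N' (k \<cdot>\<^sub>v Sf b))" unfolding Sf_def by simp
    also have "\<dots> = k \<cdot>\<^sub>v Sf b" unfolding N'_def using Sfc b by simp
    finally show ?thesis .
  qed
  define Sg where "Sg d = (SOME c. c \<in> carrier_vec n \<and> \<phi> (N c) = N' d)" for d
  have Sg: "Sg d \<in> carrier_vec n \<and> \<phi> (N (Sg d)) = N' d" if d: "d \<in> carrier_vec n'" for d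
    unfolding Sg_def using someI_ex[OF s2[OF d, unfolded Bex_def]] .
  have Sgc: "\<And>d. d \<in> carrier_vec n' \<Longrightarrow> Sg d \<in> carrier_vec n" using Sg by blast
  have SfSg: "Sf (Sg d) = d" if d: "d \<in> carrier_vec n'" for d
    unfolding Sf_def using Sg[OF d] d unfolding N'_def by simp
  have SgSf: "Sg (Sf b) = b" if b: "b \<in> carrier_vec n" for b
  proof -
    have "\<phi> (N (Sg (Sf b))) = \<phi> (N b)" using Sg[OF Sfc[OF b]] SfN[OF b] by simp
    hence "N (Sg (Sf b)) = N b" using injp Nt[OF b] Nt[OF Sgc[OF Sfc[OF b]]] by (meson inj_onD)
    thus ?thesis using Ninj Sgc[OF Sfc[OF b]] b by blast
  qed
  have Sgadd: "Sg (c + d) = Sg c + Sg d" if c: "c \<in> carrier_vec n'" and d: "d \<in> carrier_vec n'" for c d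
  proof -
    have "Sg (c + d) = Sg (Sf (Sg c) + Sf (Sg d))" using SfSg c d by simp
    also have "\<dots> = Sg (Sf (Sg c + Sg d))" using Sfadd Sgc c d by simp
    also have "\<dots> = Sg c + Sg d" using SgSf Sgc c d by simp
    finally show ?thesis .
  qed
  have Sgsm: "Sg (k \<cdot>\<^sub>v d) = k \<cdot>\<^sub>v Sg d" if d: "d \<in> carrier_vec n'" for d k
  proof -
    have "Sg (k \<cdot>\<^sub>v d) = Sg (k \<cdot>\<^sub>v Sf (Sg d))" using SfSg d by simp
    also have "\<dots> = Sg (Sf (k \<cdot>\<^sub>v Sg d))" using Sfsm Sgc d by simp
    also have "\<dots> = k \<cdot>\<^sub>v Sg d" using SgSf Sgc d by simp
    finally show ?thesis .
  qed
  obtain M where M: "M \<in> carrier_mat n' n" "\<And>b. b \<in> carrier_vec n \<Longrightarrow> M *\<^sub>v b = Sf b"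
    using lin_to_mat[of n Sf n'] Sfc Sfadd Sfsm by blast
  obtain M' where M': "M' \<in> carrier_mat n n'" "\<And>d. d \<in> carrier_vec n' \<Longrightarrow> M' *\<^sub>v d = Sg d"
    using lin_to_mat[of n' Sg n] Sgc Sgadd Sgsm by blast
  have M'M: "M' * M = 1\<^sub>m n"
  proof (rule mat_eq_by_vec)
    fix b :: "'a vec" assume b: "b \<in> carrier_vec n"
    have "(M' * M) *\<^sub>v b = M' *\<^sub>v (M *\<^sub>v b)" using M M' b by simp
    also have "\<dots> = b" using M M' b Sfc SgSf by simp
    finally show "(M' * M) *\<^sub>v b = 1\<^sub>m n *\<^sub>v b" using b by simp
  qed (use M M' in auto)
  have MM': "M * M' = 1\<^sub>m n'"
  proof (rule mat_eq_by_vec)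
    fix b :: "'a vec" assume b: "b \<in> carrier_vec n'"
    have "(M * M') *\<^sub>v b = M *\<^sub>v (M' *\<^sub>v b)" using M M' b by simp
    also have "\<dots> = b" using M M' b Sgc SfSg by simp
    finally show "(M * M') *\<^sub>v b = 1\<^sub>m n' *\<^sub>v b" using b by simp
  qed (use M M' in auto)
  have nn: "n = n'" using right_inv_dim[OF M(1) M'(1) MM'] right_inv_dim[OF M'(1) M(1) M'M] by simp
  define P where "P A = mp n' (\<phi> (aug_mat n A (0\<^sub>v n)))" for A
  have P: "P A \<in> V' \<and> (\<exists>p\<in>carrier_vec n'. \<phi> (aug_mat n A (0\<^sub>v n)) = aug_mat n' (P A) p)"
    if A: "A \<in> V" for A
  proof -
    have "aug_mat n A (0\<^sub>v n) \<in> tilde n V" using A by (auto intro: tilde_mem)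
    from tilde_elim[OF into[OF this]] obtain A' p where
      e: "\<phi> (aug_mat n A (0\<^sub>v n)) = aug_mat n' A' p" "A' \<in> V'" "p \<in> carrier_vec n'" by blast
    have "P A = A'" unfolding P_def e(1) using V'c[OF e(2)] by simp
    thus ?thesis using e by auto
  qed
  have key: "Sf (A *\<^sub>v b) = P A *\<^sub>v Sf b" if A: "A \<in> V" and b: "b \<in> carrier_vec n" for A b
  proof -
    obtain p where p: "p \<in> carrier_vec n'" "\<phi> (aug_mat n A (0\<^sub>v n)) = aug_mat n' (P A) p"
      using P[OF A] by blast
    have X: "aug_mat n A (0\<^sub>v n) \<in> tilde n V" using A by (auto intro: tilde_mem)
    have Ac: "A \<in> carrier_mat n n" using Vc A by blast
    have PAc: "P A \<in> carrier_mat n' n'" using V'c P[OF A] by blast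
    have "N' (Sf (A *\<^sub>v b)) = \<phi> (N (A *\<^sub>v b))" using SfN Ac b by simp
    also have "N (A *\<^sub>v b) = aug_mat n A (0\<^sub>v n) * N b - N b * aug_mat n A (0\<^sub>v n)"
      unfolding N_def using bracket_AN[OF Ac _ b] by simp
    also have "\<phi> \<dots> = aug_mat n' (P A) p * N' (Sf b) - N' (Sf b) * aug_mat n' (P A) p"
      unfolding pbr[OF X Nt[OF b]] p(2) SfN[OF b] ..
    also have "\<dots> = N' (P A *\<^sub>v Sf b)" unfolding N'_def using bracket_AN[OF PAc p(1) Sfc[OF b]] .
    finally have "N' (Sf (A *\<^sub>v b)) = N' (P A *\<^sub>v Sf b)" .
    thus ?thesis unfolding N'_def using aug_inj[of "0\<^sub>m n' n'" n' "0\<^sub>m n' n'"] Sfc Ac b PAc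
      by (metis mult_mat_vec_carrier zero_carrier_mat)
  qed
  have conj: "M * A * M' = P A" if A: "A \<in> V" for A
  proof -
    have Ac: "A \<in> carrier_mat n n" using Vc A by blast
    have PAc: "P A \<in> carrier_mat n' n'" using V'c P[OF A] by blast
    have "M * A = P A * M"
    proof (rule mat_eq_by_vec)
      fix b :: "'a vec" assume b: "b \<in> carrier_vec n"
      have "(M * A) *\<^sub>v b = M *\<^sub>v (A *\<^sub>v b)" using M Ac b by simp
      also have "\<dots> = P A *\<^sub>v (M *\<^sub>v b)" using M key[OF A b] Ac b by simp
      also have "\<dots> = (P A * M) *\<^sub>v b" using M PAc b by simp
      finally show "(M * A) *\<^sub>v b = (P A * M) *\<^sub>v b" .
    qed (use M Ac PAc in auto)
    hence "M * A * M' = P A * M * M'" by simp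
    also have "\<dots> = P A * (M * M')" using M M' PAc by simp
    also have "\<dots> = P A" using MM' PAc by simp
    finally show ?thesis .
  qed
  have img: "(\<lambda>A. M * A * M') ` V = V'"
  proof
    show "(\<lambda>A. M * A * M') ` V \<subseteq> V'" using conj P by auto
    show "V' \<subseteq> (\<lambda>A. M * A * M') ` V"
    proof
      fix A' assume A': "A' \<in> V'"
      have "aug_mat n' A' (0\<^sub>v n') \<in> \<phi> ` tilde n V" using A' imp by (auto intro: tilde_mem)
      then obtain x where x: "x \<in> tilde n V" "aug_mat n' A' (0\<^sub>v n') = \<phi> x" by (rule imageE)
      from tilde_elim[OF x(1)] obtain A a where Aa: "x = aug_mat n A a" "A \<in> V" "a \<in> carrier_vec n"
        by blast
      have Ac: "A \<in> carrier_mat n n" using Vc Aa by blast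
      have PAc: "P A \<in> carrier_mat n' n'" using V'c P[OF Aa(2)] by blast
      obtain p where p: "p \<in> carrier_vec n'" "\<phi> (aug_mat n A (0\<^sub>v n)) = aug_mat n' (P A) p"
        using P[OF Aa(2)] by blast
      have X: "aug_mat n A (0\<^sub>v n) \<in> tilde n V" using Aa by (auto intro: tilde_mem)
      have "x = aug_mat n A (0\<^sub>v n) + N a" unfolding N_def Aa(1) using Ac Aa by (simp add: aug_add)
      hence "\<phi> x = aug_mat n' (P A) p + N' (Sf a)" using padd[OF X Nt[OF Aa(3)]] p SfN[OF Aa(3)] by simp
      also have "\<dots> = aug_mat n' (P A) (p + Sf a)" unfolding N'_def using PAc p Sfc[OF Aa(3)]
        by (simp add: aug_add)
      finally have "A' = P A" using x(2) aug_inj[of A' n' "P A" "0\<^sub>v n'" "p + Sf a"] V'c[OF A'] PAc p Sfc[OF Aa(3)]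
        by simp
      thus "A' \<in> (\<lambda>A. M * A * M') ` V"
        by (intro image_eqI[of _ _ A]) (use conj[OF Aa(2)] Aa(2) in auto)
    qed
  qed
  show ?thesis using nn M M' M'M MM' img by auto
qed


definition ext :: "nat \<Rightarrow> 'a::field mat \<Rightarrow> 'a mat" where
  "ext n S = mat (n+1) (n+1) (\<lambda>(i,j). if i < n then (if j < n then S $$ (i,j) else 0) else if j = n then 1 else 0)"

lemma ext_carrier[simp]: "ext n S \<in> carrier_mat (n+1) (n+1)" unfolding ext_def by auto
lemma ext_dims[simp]: "dim_row (ext n S) = n+1" "dim_col (ext n S) = n+1" unfolding ext_def by auto

lemma ext_index: "i < n+1 \<Longrightarrow> j < n+1 \<Longrightarrow> ext n S $$ (i,j) =
  (if i < n then (if j < n then S $$ (i,j) else 0) else if j = n then 1 else 0)"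
  unfolding ext_def by auto

lemma ext_aug: assumes S: "S \<in> carrier_mat n n" and A: "A \<in> carrier_mat n n" and a: "a \<in> carrier_vec n"
  shows "ext n S * aug_mat n A a = aug_mat n (S * A) (S *\<^sub>v a)"
proof (rule eq_matI)
  fix i j assume "i < dim_row (aug_mat n (S * A) (S *\<^sub>v a))" "j < dim_col (aug_mat n (S * A) (S *\<^sub>v a))"
  hence i: "i < n+1" and j: "j < n+1" by auto
  show "(ext n S * aug_mat n A a) $$ (i,j) = aug_mat n (S * A) (S *\<^sub>v a) $$ (i,j)"
    using i j S A a by (auto simp: ext_index aug_index scalar_prod_def sum.atLeast0_lessThan_Suc intro!: sum.cong)
qed auto

lemma aug_ext: assumes X: "X \<in> carrier_mat n n" and x: "x \<in> carrier_vec n" and T: "T \<in> carrier_mat n n"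
  shows "aug_mat n X x * ext n T = aug_mat n (X * T) x"
proof (rule eq_matI)
  fix i j assume "i < dim_row (aug_mat n (X * T) x)" "j < dim_col (aug_mat n (X * T) x)"
  hence i: "i < n+1" and j: "j < n+1" by auto
  show "(aug_mat n X x * ext n T) $$ (i,j) = aug_mat n (X * T) x $$ (i,j)"
    using i j X T x by (auto simp: ext_index aug_index scalar_prod_def sum.atLeast0_lessThan_Suc intro!: sum.cong)
qed auto

lemma ext_ext: assumes S: "S \<in> carrier_mat n n" and T: "T \<in> carrier_mat n n"
  shows "ext n S * ext n T = ext n (S * T)"
proof (rule eq_matI)
  fix i j assume "i < dim_row (ext n (S * T))" "j < dim_col (ext n (S * T))"
  hence i: "i < n+1" and j: "j < n+1" by auto
  show "(ext n S * ext n T) $$ (i,j) = ext n (S * T) $$ (i,j)"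
    using i j S T by (auto simp: ext_index scalar_prod_def sum.atLeast0_lessThan_Suc intro!: sum.cong)
qed auto

lemma ext_one: "ext n (1\<^sub>m n) = (1\<^sub>m (n+1) :: 'a::field mat)"
  by (rule eq_matI) (auto simp: ext_index)


lemma ii_to_iii:
  fixes V V' :: "'a::field mat set"
  assumes cV: "comm_mat_space n V" and S: "S \<in> carrier_mat n n" and T: "T \<in> carrier_mat n n"
    and ST: "S * T = 1\<^sub>m n" and img: "(\<lambda>A. S * A * T) ` V = V'"
  shows "\<exists>R Q. R \<in> carrier_mat (n+1) (n+1) \<and> Q \<in> carrier_mat (n+1) (n+1) \<and>
                 R * Q = 1\<^sub>m (n+1) \<and> Q * R = 1\<^sub>m (n+1) \<and>
                 (\<lambda>M. R * M * Q) ` tilde n V = tilde n V'"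
proof (intro exI conjI)
  have TS: "T * S = 1\<^sub>m n" using mat_mult_left_right_inverse[OF S T ST] .
  have Vc: "\<And>A. A \<in> V \<Longrightarrow> A \<in> carrier_mat n n" using cV unfolding comm_mat_space_def by auto
  show "ext n S \<in> carrier_mat (n+1) (n+1)" "ext n T \<in> carrier_mat (n+1) (n+1)" by auto
  show "ext n S * ext n T = 1\<^sub>m (n+1)" using ext_ext[OF S T] ST ext_one by metis
  show "ext n T * ext n S = 1\<^sub>m (n+1)" using ext_ext[OF T S] TS ext_one by metis
  have conj: "ext n S * aug_mat n A a * ext n T = aug_mat n (S * A * T) (S *\<^sub>v a)"
    if A: "A \<in> carrier_mat n n" and a: "a \<in> carrier_vec n" for A a
    using ext_aug[OF S A a] aug_ext[of "S * A" n "S *\<^sub>v a" T] S A a T by simp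
  show "(\<lambda>M. ext n S * M * ext n T) ` tilde n V = tilde n V'"
  proof
    show "(\<lambda>M. ext n S * M * ext n T) ` tilde n V \<subseteq> tilde n V'"
    proof
      fix y assume "y \<in> (\<lambda>M. ext n S * M * ext n T) ` tilde n V"
      then obtain x where x: "x \<in> tilde n V" "y = ext n S * x * ext n T" by blast
      from tilde_elim[OF x(1)] obtain A a where Aa: "x = aug_mat n A a" "A \<in> V" "a \<in> carrier_vec n"
        by blast
      have "y = aug_mat n (S * A * T) (S *\<^sub>v a)" using x(2) Aa conj Vc by simp
      moreover have "S * A * T \<in> V'" using img Aa(2) by blast
      ultimately show "y \<in> tilde n V'" using S Aa by (auto intro: tilde_mem)
    qed
    show "tilde n V' \<subseteq> (\<lambda>M. ext n S * M * ext n T) ` tilde n V"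
    proof
      fix y assume "y \<in> tilde n V'"
      from tilde_elim[OF this] obtain A' a' where Aa: "y = aug_mat n A' a'" "A' \<in> V'" "a' \<in> carrier_vec n"
        by blast
      obtain A where A: "A \<in> V" "A' = S * A * T" using img Aa(2) by blast
      have "S *\<^sub>v (T *\<^sub>v a') = a'" using assoc_mult_mat_vec[OF S T Aa(3), symmetric] ST Aa(3) by simp
      hence "y = ext n S * aug_mat n A (T *\<^sub>v a') * ext n T" using conj[of A "T *\<^sub>v a'"] Vc A Aa T by simp
      moreover have "aug_mat n A (T *\<^sub>v a') \<in> tilde n V" using A T Aa by (auto intro: tilde_mem)
      ultimately show "y \<in> (\<lambda>M. ext n S * M * ext n T) ` tilde n V" by blast
    qed
  qed
qed

theorem theorem2:
  fixes V :: "'a::field mat set" and V' :: "'a mat set" and n n' :: nat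
  assumes "\<not> (finite (UNIV :: 'a set) \<and> card (UNIV :: 'a set) = 2)"
    and "comm_mat_space n V" and "comm_mat_space n' V'"
    and "\<exists>A\<in>V. invertible_mat A" and "\<exists>A\<in>V'. invertible_mat A"
  shows "(lie_isomorphic (tilde n V) (tilde n' V')
           \<longleftrightarrow> (n = n' \<and> (\<exists>S T. S \<in> carrier_mat n n \<and> T \<in> carrier_mat n n \<and>
                 S * T = 1\<^sub>m n \<and> T * S = 1\<^sub>m n \<and> (\<lambda>A. S * A * T) ` V = V')))
       \<and> ((n = n' \<and> (\<exists>S T. S \<in> carrier_mat n n \<and> T \<in> carrier_mat n n \<and>
                 S * T = 1\<^sub>m n \<and> T * S = 1\<^sub>m n \<and> (\<lambda>A. S * A * T) ` V = V'))
           \<longleftrightarrow> (n = n' \<and> (\<exists>R Q. R \<in> carrier_mat (n+1) (n+1) \<and> Q \<in> carrier_mat (n+1) (n+1) \<and>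
                 R * Q = 1\<^sub>m (n+1) \<and> Q * R = 1\<^sub>m (n+1) \<and>
                 (\<lambda>M. R * M * Q) ` tilde n V = tilde n' V')))"
proof -
  have i_ii: "lie_isomorphic (tilde n V) (tilde n' V') \<Longrightarrow> n = n' \<and> (\<exists>S T. S \<in> carrier_mat n n \<and> T \<in> carrier_mat n n \<and>
                 S * T = 1\<^sub>m n \<and> T * S = 1\<^sub>m n \<and> (\<lambda>A. S * A * T) ` V = V')"
    unfolding lie_isomorphic_def using i_to_ii[OF assms(2-5)] by blast
  have ii_iii: "n = n' \<and> (\<exists>S T. S \<in> carrier_mat n n \<and> T \<in> carrier_mat n n \<and>
                 S * T = 1\<^sub>m n \<and> T * S = 1\<^sub>m n \<and> (\<lambda>A. S * A * T) ` V = V') \<Longrightarrow>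
     n = n' \<and> (\<exists>R Q. R \<in> carrier_mat (n+1) (n+1) \<and> Q \<in> carrier_mat (n+1) (n+1) \<and>
                 R * Q = 1\<^sub>m (n+1) \<and> Q * R = 1\<^sub>m (n+1) \<and>
                 (\<lambda>M. R * M * Q) ` tilde n V = tilde n' V')"
    using ii_to_iii[OF assms(2)] by metis
  have iii_i: "n = n' \<and> (\<exists>R Q. R \<in> carrier_mat (n+1) (n+1) \<and> Q \<in> carrier_mat (n+1) (n+1) \<and>
                 R * Q = 1\<^sub>m (n+1) \<and> Q * R = 1\<^sub>m (n+1) \<and>
                 (\<lambda>M. R * M * Q) ` tilde n V = tilde n' V') \<Longrightarrow> lie_isomorphic (tilde n V) (tilde n' V')"
    unfolding lie_isomorphic_def using conj_lie_iso[OF tilde_carrier[OF assms(2)]] by blast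
  show ?thesis using i_ii ii_iii iii_i by blast
qed

end
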